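(* For the $m\times m$ matrix multiplication tensor $\mathcal M_m$ one has $\underline R(\mathcal M_m)\ge\frac32m^2-\frac12$ if $m$ is odd, and $\underline R(\mathcal M_m)\ge\frac32m^2-2$ if $m$ is even.
   Context: $\mathcal M_m=\sum_{i,j,l=1}^m|ij\rangle\otimes|jl\rangle\otimes|li\rangle\in\bigotimes^3\mathbb C^{m\times m}$, where $|ij\rangle$ denotes the standard basis of $\mathbb C^{m\times m}$. The border rank $\underline R(w)$ of a tensor $w$ is the least $r$ such that $w$ is a limit of tensors each expressible as a sum of at most $r$ tensors of the form $u\otimes v\otimes x$. *)

theory Defs
  imports Complex_Main
begin

text \<open>Tensors in C^I (x) C^I (x) C^I for a finite index set I are represented as
  functions of three indices; only their values on I x I x I matter.\<close>

type_synonym idx = "nat \<times> nat"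
type_synonym tensor3 = "idx \<Rightarrow> idx \<Rightarrow> idx \<Rightarrow> complex"

definition mat_idx :: "nat \<Rightarrow> idx set" where
  "mat_idx m = {0..<m} \<times> {0..<m}"

definition matmul_tensor :: "nat \<Rightarrow> tensor3" where
  "matmul_tensor m = (\<lambda>a b c. \<Sum>i<m. \<Sum>j<m. \<Sum>l<m.
      (if a = (i,j) \<and> b = (j,l) \<and> c = (l,i) then 1 else 0))"

definition sum_rank_one :: "nat \<Rightarrow> (nat \<Rightarrow> idx \<Rightarrow> complex) \<Rightarrow> (nat \<Rightarrow> idx \<Rightarrow> complex)
     \<Rightarrow> (nat \<Rightarrow> idx \<Rightarrow> complex) \<Rightarrow> tensor3" where
  "sum_rank_one r u v x = (\<lambda>a b c. \<Sum>s<r. u s a * v s b * x s c)"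

text \<open>T is a limit of tensors of rank at most r (convergence in the finite-dimensional
  space C^I (x) C^I (x) C^I, i.e. coordinatewise on I x I x I).\<close>
definition border_rank_le :: "idx set \<Rightarrow> tensor3 \<Rightarrow> nat \<Rightarrow> bool" where
  "border_rank_le I T r \<longleftrightarrow>
     (\<exists>u v x :: nat \<Rightarrow> nat \<Rightarrow> idx \<Rightarrow> complex.
        \<forall>a\<in>I. \<forall>b\<in>I. \<forall>c\<in>I.
          (\<lambda>k. sum_rank_one r (u k) (v k) (x k) a b c) \<longlonglongrightarrow> T a b c)"

definition border_rank :: "idx set \<Rightarrow> tensor3 \<Rightarrow> nat" where
  "border_rank I T = (LEAST r. border_rank_le I T r)"

end

theory Submission imports Defs "Jordan_Normal_Form.Determinant" begin

lemma sum_split: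
  fixes f :: "nat \<Rightarrow> 'a::comm_monoid_add"
  shows "(\<Sum>l<a*b. f l) = (\<Sum>i<a. \<Sum>j<b. f (i*b+j))"
proof (induction a)
  case 0 then show ?case by simp
next
  case (Suc a)
  have "(\<Sum>l<Suc a*b. f l) = (\<Sum>l<a*b. f l) + (\<Sum>l\<in>{a*b..<a*b+b}. f l)"
    by (simp add: atLeast0LessThan[symmetric] sum.atLeastLessThan_concat add.commute)
  also have "(\<Sum>l\<in>{a*b..<a*b+b}. f l) = (\<Sum>j<b. f (a*b+j))"
    using sum.shift_bounds_nat_ivl[of f 0 "a*b" b]
    by (simp add: atLeast0LessThan add.commute)
  finally show ?case using Suc by simp
qed


definition eps :: "nat \<Rightarrow> nat \<Rightarrow> nat \<Rightarrow> complex" where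
  "eps p q k = (if (p,q,k) = (0,1,2) \<or> (p,q,k) = (1,2,0) \<or> (p,q,k) = (2,0,1) then 1
     else if (p,q,k) = (0,2,1) \<or> (p,q,k) = (2,1,0) \<or> (p,q,k) = (1,0,2) then -1 else 0)"

definition cm :: "(nat \<Rightarrow> complex) \<Rightarrow> nat \<Rightarrow> nat \<Rightarrow> complex" where
  "cm A p q = (\<Sum>k<3. eps p q k * A k)"

lemma less3: "(p::nat) < 3 \<Longrightarrow> p = 0 \<or> p = 1 \<or> p = 2" by auto
lemma all3: "(\<forall>p<(3::nat). P p) \<longleftrightarrow> P 0 \<and> P 1 \<and> P 2"
  by (auto simp: numeral_3_eq_3 numeral_2_eq_2 less_Suc_eq)
lemma sum2: "(\<Sum>t<(2::nat). f t) = f 0 + f 1"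
  by (simp add: numeral_2_eq_2)
lemma sum3: "(\<Sum>t<(3::nat). f t) = f 0 + f 1 + f 2"
  by (simp add: numeral_3_eq_3 numeral_2_eq_2)

lemma cm_vals: "cm A 0 0 = 0" "cm A 0 1 = A 2" "cm A 0 2 = - A 1"
  "cm A 1 0 = - A 2" "cm A 1 1 = 0" "cm A 1 2 = A 0"
  "cm A 2 0 = A 1" "cm A 2 1 = - A 0" "cm A 2 2 = 0"
  by (simp_all add: cm_def eps_def eval_nat_numeral)

lemma rank2: "\<exists>P Q. \<forall>p<3. \<forall>q<3. cm A p q = (\<Sum>t<(2::nat). P p t * Q t q)"
proof (cases "A 0 \<noteq> 0")
  case True
  let ?P = "\<lambda>p t. if t = 0 then cm A p 1 else cm A p 2"
  let ?Q = "\<lambda>t q. if t = 0 then (if q = 0 then - A 1 / A 0 else if q = 1 then 1 else 0)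
                   else (if q = 0 then - A 2 / A 0 else if q = 1 then 0 else 1)"
  show ?thesis
    apply (rule exI[of _ ?P], rule exI[of _ ?Q])
    using True by (simp only: all3 sum2, simp add: cm_vals cm_vals[unfolded One_nat_def] field_simps)
next
  case F0: False
  show ?thesis
  proof (cases "A 1 \<noteq> 0")
    case True
    let ?P = "\<lambda>p t. if t = 0 then cm A p 0 else cm A p 2"
    let ?Q = "\<lambda>t q. if t = 0 then (if q = 0 then 1 else if q = 1 then - A 0 / A 1 else 0)
                     else (if q = 0 then 0 else if q = 1 then - A 2 / A 1 else 1)"
    show ?thesis
      apply (rule exI[of _ ?P], rule exI[of _ ?Q])
      using True by (simp only: all3 sum2, simp add: cm_vals cm_vals[unfolded One_nat_def] field_simps)
  next
    case F1: False
    show ?thesis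
    proof (cases "A 2 \<noteq> 0")
      case True
      let ?P = "\<lambda>p t. if t = 0 then cm A p 0 else cm A p 1"
      let ?Q = "\<lambda>t q. if t = 0 then (if q = 0 then 1 else if q = 1 then 0 else - A 0 / A 2)
                       else (if q = 0 then 0 else if q = 1 then 1 else - A 1 / A 2)"
      show ?thesis
        apply (rule exI[of _ ?P], rule exI[of _ ?Q])
        using True by (simp only: all3 sum2, simp add: cm_vals cm_vals[unfolded One_nat_def] field_simps)
    next
      case False
      show ?thesis
        apply (rule exI[of _ "\<lambda>p t. 0"], rule exI[of _ "\<lambda>t q. 0"])
        using False F0 F1 by (simp only: all3 sum2, simp add: cm_vals cm_vals[unfolded One_nat_def])
    qed
  qed
qed


definition dec :: "nat \<Rightarrow> nat \<Rightarrow> nat \<times> idx" where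
  "dec m R = (R div (m*m), ((R mod (m*m)) div m, R mod m))"

definition alpha :: "nat \<Rightarrow> nat \<Rightarrow> idx \<Rightarrow> complex" where
  "alpha m k a = (if k = 0 then (if fst a = snd a then 1 else 0)
      else if k = 1 then (if snd a = Suc (fst a) mod m then 1 else 0)
      else (if fst a = snd a then of_nat (fst a) else 0))"

definition kz :: "nat \<Rightarrow> tensor3 \<Rightarrow> nat \<times> idx \<Rightarrow> nat \<times> idx \<Rightarrow> complex" where
  "kz m T pc qb = (\<Sum>k<3. eps (fst pc) (fst qb) k *
      (\<Sum>a\<in>mat_idx m. alpha m k a * T a (snd qb) (snd pc)))"

definition Kmat :: "nat \<Rightarrow> tensor3 \<Rightarrow> complex mat" where
  "Kmat m T = mat (3*(m*m)) (3*(m*m)) (\<lambda>(R,C). kz m T (dec m R) (dec m C))"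

lemma dec_bound: assumes "R < 3*(m*m)"
  shows "fst (dec m R) < 3" "snd (dec m R) \<in> mat_idx m"
proof -
  have m: "m > 0" using assms by (cases m) auto
  have mm: "m*m > 0" using m by simp
  show "fst (dec m R) < 3" using assms mm by (simp add: dec_def less_mult_imp_div_less)
  have "R mod (m*m) < m*m" using mm by simp
  then have "(R mod (m*m)) div m < m" using m by (simp add: less_mult_imp_div_less)
  then show "snd (dec m R) \<in> mat_idx m" using m by (simp add: dec_def mat_idx_def)
qed

lemma kz_sum: "kz m (sum_rank_one r u v x) (p,c) (q,b) =
   (\<Sum>s<r. cm (\<lambda>k. \<Sum>a\<in>mat_idx m. alpha m k a * u s a) p q * v s b * x s c)"
proof -
  have "kz m (sum_rank_one r u v x) (p,c) (q,b) =
      (\<Sum>k<3. \<Sum>a\<in>mat_idx m. \<Sum>s<r. eps p q k * alpha m k a * u s a * v s b * x s c)"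
    unfolding kz_def sum_rank_one_def
    by (simp add: sum_distrib_left mult.assoc)
  also have "\<dots> = (\<Sum>k<3. \<Sum>s<r. \<Sum>a\<in>mat_idx m. eps p q k * alpha m k a * u s a * v s b * x s c)"
    by (rule sum.cong[OF refl], rule sum.swap)
  also have "\<dots> = (\<Sum>s<r. \<Sum>k<3. \<Sum>a\<in>mat_idx m. eps p q k * alpha m k a * u s a * v s b * x s c)"
    by (rule sum.swap)
  also have "\<dots> = (\<Sum>s<r. cm (\<lambda>k. \<Sum>a\<in>mat_idx m. alpha m k a * u s a) p q * v s b * x s c)"
    unfolding cm_def by (simp add: sum_distrib_left sum_distrib_right mult.assoc)
  finally show ?thesis .
qed

lemma low_rank: assumes "2*r < 3*(m*m)"
  shows "det (Kmat m (sum_rank_one r u v x)) = 0"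
proof -
  define N where "N = 3*(m*m)"
  define Af where "Af s = (\<lambda>k. \<Sum>a\<in>mat_idx m. alpha m k a * u s a)" for s
  have "\<forall>s. \<exists>PQ. \<forall>p<3. \<forall>q<3. cm (Af s) p q = (\<Sum>t<(2::nat). fst PQ p t * snd PQ t q)"
    using rank2 by fastforce
  then obtain PQ where PQ: "\<And>s p q. p < 3 \<Longrightarrow> q < 3 \<Longrightarrow>
      cm (Af s) p q = (\<Sum>t<(2::nat). fst (PQ s) p t * snd (PQ s) t q)"
    by metis
  define A' where "A' = mat N N (\<lambda>(R,l). if l < 2*r then
      fst (PQ (l div 2)) (fst (dec m R)) (l mod 2) * x (l div 2) (snd (dec m R)) else 0)"
  define B' where "B' = mat N N (\<lambda>(l,C). if l < 2*r then
      snd (PQ (l div 2)) (l mod 2) (fst (dec m C)) * v (l div 2) (snd (dec m C)) else 0)"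
  have A'c: "A' \<in> carrier_mat N N" and B'c: "B' \<in> carrier_mat N N"
    unfolding A'_def B'_def by auto
  have lt: "s*2+t < N" "s*2+t < 2*r" if "s < r" "t < 2" for s t :: nat
    using that assms unfolding N_def by linarith+
  have eq: "Kmat m (sum_rank_one r u v x) = A' * B'"
  proof (rule eq_matI)
    fix R C assume R: "R < dim_row (A' * B')" and C: "C < dim_col (A' * B')"
    then have R: "R < N" and C: "C < N" using A'c B'c by auto
    let ?f = "\<lambda>l. A' $$ (R,l) * B' $$ (l,C)"
    have "(A' * B') $$ (R,C) = (\<Sum>l\<in>{0..<N}. ?f l)"
      using R C A'c B'c by (simp add: scalar_prod_def)
    also have "\<dots> = (\<Sum>l\<in>{0..<2*r}. ?f l)"
      by (rule sum.mono_neutral_right, use assms R in \<open>auto simp: N_def A'_def\<close>)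
    also have "\<dots> = (\<Sum>l<r*2. ?f l)" by (simp add: atLeast0LessThan mult.commute)
    also have "\<dots> = (\<Sum>s<r. \<Sum>t<2. ?f (s*2+t))" by (rule sum_split)
    also have "\<dots> = (\<Sum>s<r. \<Sum>t<(2::nat). fst (PQ s) (fst (dec m R)) t * x s (snd (dec m R))
          * (snd (PQ s) t (fst (dec m C)) * v s (snd (dec m C))))"
      using R C lt by (intro sum.cong refl) (auto simp: A'_def B'_def)
    also have "\<dots> = (\<Sum>s<r. cm (Af s) (fst (dec m R)) (fst (dec m C)) * v s (snd (dec m C)) * x s (snd (dec m R)))"
      using dec_bound[of R m] dec_bound[of C m] R C
      by (intro sum.cong refl) (simp add: N_def PQ sum_distrib_left mult_ac)
    also have "\<dots> = Kmat m (sum_rank_one r u v x) $$ (R,C)"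
      using R C unfolding Kmat_def N_def
      by (simp add: kz_sum[of m r u v x "fst (dec m R)" "snd (dec m R)" "fst (dec m C)" "snd (dec m C)", simplified] Af_def)
    finally show "Kmat m (sum_rank_one r u v x) $$ (R,C) = (A' * B') $$ (R,C)" ..
  qed (auto simp: Kmat_def A'_def B'_def N_def)
  have N1: "N - 1 < N" "2*r \<le> N - 1" using assms by (auto simp: N_def)
  have "A' *\<^sub>v unit_vec N (N-1) = 0\<^sub>v N"
    by (rule eq_vecI, use N1 A'c in \<open>auto simp: A'_def\<close>)
  then have "det A' = 0"
    using det_0_iff_vec_prod_zero[OF A'c] N1 by (metis unit_vec_carrier unit_vec_nonzero)
  then show ?thesis using eq det_mult[OF A'c B'c] by simp
qed


lemma cont: assumes "\<forall>a\<in>mat_idx m. \<forall>b\<in>mat_idx m. \<forall>c\<in>mat_idx m. (\<lambda>k. S k a b c) \<longlonglongrightarrow> T a b c"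
  shows "(\<lambda>k. det (Kmat m (S k))) \<longlonglongrightarrow> det (Kmat m T)"
proof -
  define N where "N = 3*(m*m)"
  have entry: "(\<lambda>k. Kmat m (S k) $$ (R,C)) \<longlonglongrightarrow> Kmat m T $$ (R,C)" if "R < N" "C < N" for R C
  proof -
    have b: "snd (dec m R) \<in> mat_idx m" "snd (dec m C) \<in> mat_idx m"
      using dec_bound that by (auto simp: N_def)
    show ?thesis using that b unfolding Kmat_def kz_def N_def
      by (auto intro!: tendsto_sum tendsto_mult_left assms[rule_format])
  qed
  have c: "Kmat m X \<in> carrier_mat N N" for X by (simp add: Kmat_def N_def)
  show ?thesis
    unfolding det_def'[OF c] 
    by (intro tendsto_sum tendsto_mult_left tendsto_prod entry)
      (auto simp: permutes_in_image)
qed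

lemma M_val: assumes "a \<in> mat_idx m" "b \<in> mat_idx m" "c \<in> mat_idx m"
  shows "matmul_tensor m a b c = (if snd a = fst b \<and> snd b = fst c \<and> snd c = fst a then 1 else 0)"
proof -
  obtain a1 a2 b1 b2 c1 c2 where ab: "a = (a1,a2)" "b = (b1,b2)" "c = (c1,c2)" by (cases a, cases b, cases c) auto
  have lt: "a1 < m" "a2 < m" "b2 < m" using assms ab by (auto simp: mat_idx_def)
  let ?K = "(if b1 = a2 \<and> c1 = b2 \<and> c2 = a1 then 1 else 0) :: complex"
  have "\<And>i j l. (if a = (i,j) \<and> b = (j,l) \<and> c = (l,i) then 1 else 0) =
     (if l = b2 then (if j = a2 then (if i = a1 then ?K else 0) else 0) else (0::complex))"
    using ab by auto
  then have "matmul_tensor m a b c = (\<Sum>i<m. \<Sum>j<m. \<Sum>l<m.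
     (if l = b2 then (if j = a2 then (if i = a1 then ?K else 0) else 0) else (0::complex)))"
    unfolding matmul_tensor_def by simp
  also have "\<dots> = ?K" using lt by simp
  finally show ?thesis using ab by auto
qed

lemma kzM_inner: assumes "(x1,x2) \<in> mat_idx m" "(y1,y2) \<in> mat_idx m"
  shows "(\<Sum>a\<in>mat_idx m. alpha m k a * matmul_tensor m a (y1,y2) (x1,x2)) =
     (if y2 = x1 then alpha m k (x2,y1) else 0)"
proof -
  have "(\<Sum>a\<in>mat_idx m. alpha m k a * matmul_tensor m a (y1,y2) (x1,x2)) =
     (\<Sum>a\<in>mat_idx m. if a = (x2,y1) then (if y2 = x1 then alpha m k a else 0) else 0)"
    using assms by (intro sum.cong refl) (auto simp: M_val)
  also have "\<dots> = (if y2 = x1 then alpha m k (x2,y1) else 0)"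
    using assms by (simp add: mat_idx_def)
  finally show ?thesis .
qed


lemma enc_dec: assumes "q < 3" "i < m" "j < m"
  shows "q*(m*m) + i*m + j < 3*(m*m)" "dec m (q*(m*m) + i*m + j) = (q,(i,j))"
proof -
  have ij: "i*m + j < m*m"
  proof -
    have "i*m + j < i*m + m" using assms by simp
    also have "\<dots> = (Suc i) * m" by simp
    also have "\<dots> \<le> m*m" using assms by (intro mult_right_mono) auto
    finally show ?thesis .
  qed
  have "q*(m*m) + (i*m + j) < q*(m*m) + m*m" using ij by simp
  also have "\<dots> = Suc q * (m*m)" by simp
  also have "\<dots> \<le> 3*(m*m)" using assms by (intro mult_right_mono) auto
  finally show "q*(m*m) + i*m + j < 3*(m*m)" by simp
  have m: "m > 0" using assms by auto
  have "(q*(m*m) + (i*m + j)) div (m*m) = q" using ij m by simp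
  moreover have "(q*(m*m) + (i*m + j)) mod (m*m) = i*m+j" using ij by simp
  moreover have "(i*m+j) div m = i" using assms by simp
  moreover have "(q*(m*m) + (i*m + j)) mod m = j"
  proof -
    have e: "q*(m*m) + (i*m + j) = j + (q*m + i)*m" by (simp add: algebra_simps)
    have "(j + (q*m + i)*m) mod m = j mod m" by (rule mod_mult_self1)
    show ?thesis by (simp only: e mod_mult_self1) (simp add: assms)
  qed
  ultimately show "dec m (q*(m*m) + i*m + j) = (q,(i,j))" by (simp add: dec_def add.assoc)
qed

lemma dec_enc: assumes "C < 3*(m*m)"
  shows "C = fst (dec m C)*(m*m) + fst (snd (dec m C))*m + snd (snd (dec m C))"
proof -
  have "C = C div (m*m) * (m*m) + C mod (m*m)" by (rule div_mult_mod_eq[symmetric])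
  also have "C mod (m*m) = (C mod (m*m)) div m * m + (C mod (m*m)) mod m" by (rule div_mult_mod_eq[symmetric])
  also have "(C mod (m*m)) mod m = C mod m" by (simp add: mod_mult2_eq)
  finally show ?thesis by (simp add: dec_def)
qed

lemma sum_enc: fixes f :: "nat \<Rightarrow> 'a::comm_monoid_add" shows "(\<Sum>C\<in>{0..<3*(m*m)}. f C) = (\<Sum>q<3. \<Sum>i<m. \<Sum>j<m. f (q*(m*m) + i*m + j))"
proof -
  have "(\<Sum>C\<in>{0..<3*(m*m)}. f C) = (\<Sum>q<3. \<Sum>t<m*m. f (q*(m*m) + t))"
    by (simp add: atLeast0LessThan sum_split)
  also have "\<dots> = (\<Sum>q<3. \<Sum>i<m. \<Sum>j<m. f (q*(m*m) + (i*m + j)))"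
    by (simp add: sum_split)
  finally show ?thesis by (simp add: add.assoc)
qed

lemma alpha_sum: assumes "x2 < m"
  shows "(\<Sum>i<m. alpha m 0 (x2,i) * g i) = g x2"
    "(\<Sum>i<m. alpha m 1 (x2,i) * g i) = g (Suc x2 mod m)"
    "(\<Sum>i<m. alpha m 2 (x2,i) * g i) = of_nat x2 * g x2"
proof -
  have m: "m > 0" using assms by auto
  have "(\<Sum>i<m. alpha m 0 (x2,i) * g i) = (\<Sum>i<m. if i = x2 then g i else 0)"
    by (intro sum.cong refl) (auto simp: alpha_def)
  then show "(\<Sum>i<m. alpha m 0 (x2,i) * g i) = g x2" using assms by simp
  have "(\<Sum>i<m. alpha m 1 (x2,i) * g i) = (\<Sum>i<m. if i = Suc x2 mod m then g i else 0)"
    by (intro sum.cong refl) (auto simp: alpha_def)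
  then show "(\<Sum>i<m. alpha m 1 (x2,i) * g i) = g (Suc x2 mod m)" using m by simp
  have "(\<Sum>i<m. alpha m 2 (x2,i) * g i) = (\<Sum>i<m. if i = x2 then of_nat x2 * g i else 0)"
    by (intro sum.cong refl) (auto simp: alpha_def)
  then show "(\<Sum>i<m. alpha m 2 (x2,i) * g i) = of_nat x2 * g x2" using assms by simp
qed

lemma mem_idx: "i < m \<Longrightarrow> j < m \<Longrightarrow> (i,j) \<in> mat_idx m" by (simp add: mat_idx_def)

lemma row_eq:
  assumes "p < 3" "x1 < m" "x2 < m" and w: "w \<in> carrier_vec (3*(m*m))"
  shows "(Kmat m (matmul_tensor m) *\<^sub>v w) $ (p*(m*m) + x1*m + x2) =
    (\<Sum>q<3. \<Sum>k<3. eps p q k * (\<Sum>i<m. alpha m k (x2,i) * w $ (q*(m*m) + i*m + x1)))"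
proof -
  let ?N = "3*(m*m)"
  let ?R = "p*(m*m) + x1*m + x2"
  let ?Y = "\<lambda>q i j. w $ (q*(m*m) + i*m + j)"
  have R: "?R < ?N" and dR: "dec m ?R = (p,(x1,x2))" using enc_dec assms by auto
  have "(Kmat m (matmul_tensor m) *\<^sub>v w) $ ?R = (\<Sum>C\<in>{0..<?N}. Kmat m (matmul_tensor m) $$ (?R,C) * w $ C)"
    using R w by (simp add: Kmat_def scalar_prod_def)
  also have "\<dots> = (\<Sum>q<3. \<Sum>i<m. \<Sum>j<m. kz m (matmul_tensor m) (p,(x1,x2)) (q,(i,j)) * ?Y q i j)"
    unfolding sum_enc
  proof (intro sum.cong refl)
    fix q i j :: nat assume "q \<in> {..<3}" "i \<in> {..<m}" "j \<in> {..<m}"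
    then have "q*(m*m)+i*m+j < ?N" "dec m (q*(m*m)+i*m+j) = (q,(i,j))" using enc_dec by auto
    then show "Kmat m (matmul_tensor m) $$ (?R, q*(m*m)+i*m+j) * w $ (q*(m*m)+i*m+j) =
        kz m (matmul_tensor m) (p,(x1,x2)) (q,(i,j)) * ?Y q i j"
      using R dR by (simp add: Kmat_def)
  qed
  also have "\<dots> = (\<Sum>q<3. \<Sum>i<m. \<Sum>j<m. if j = x1 then (\<Sum>k<3. eps p q k * alpha m k (x2,i)) * ?Y q i j else 0)"
    using assms mem_idx by (intro sum.cong refl) (auto simp: kz_def kzM_inner)
  also have "\<dots> = (\<Sum>q<3. \<Sum>i<m. (\<Sum>k<3. eps p q k * alpha m k (x2,i)) * ?Y q i x1)"
    using assms by simp
  also have "\<dots> = (\<Sum>q<3. \<Sum>k<3. eps p q k * (\<Sum>i<m. alpha m k (x2,i) * ?Y q i x1))"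
    by (simp add: sum_distrib_left sum_distrib_right mult.assoc sum.swap[of _ "{..<m}"])
  finally show ?thesis .
qed


lemma detM: assumes "m \<ge> 2" shows "det (Kmat m (matmul_tensor m)) \<noteq> 0"
proof
  let ?N = "3*(m*m)"
  assume "det (Kmat m (matmul_tensor m)) = 0"
  then obtain w where w: "w \<in> carrier_vec ?N" "w \<noteq> 0\<^sub>v ?N" "Kmat m (matmul_tensor m) *\<^sub>v w = 0\<^sub>v ?N"
    using det_0_iff_vec_prod_zero[of "Kmat m (matmul_tensor m)" ?N] by (auto simp: Kmat_def)
  define Y where "Y q i x1 = w $ (q*(m*m) + i*m + x1)" for q i x1
  have eq: "(\<Sum>q<3. \<Sum>k<3. eps p q k * (\<Sum>i<m. alpha m k (x2,i) * Y q i x1)) = 0"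
    if "p < 3" "x1 < m" "x2 < m" for p x1 x2
  proof -
    have "(Kmat m (matmul_tensor m) *\<^sub>v w) $ (p*(m*m) + x1*m + x2) = 0"
      using w(3) enc_dec(1)[OF that] by simp
    then show ?thesis using row_eq[OF that w(1)] by (simp add: Y_def)
  qed
  have e0: "of_nat x2 * Y 1 x2 x1 = Y 2 (Suc x2 mod m) x1" if "x1 < m" "x2 < m" for x1 x2
    using eq[of 0 x1 x2] that by (simp add: sum3 eps_def alpha_sum alpha_sum[unfolded One_nat_def])
  have e1: "Y 2 x2 x1 = of_nat x2 * Y 0 x2 x1" if "x1 < m" "x2 < m" for x1 x2
    using eq[of 1 x1 x2] that by (simp add: sum3 eps_def alpha_sum alpha_sum[unfolded One_nat_def])
  have e2: "Y 0 (Suc x2 mod m) x1 = Y 1 x2 x1" if "x1 < m" "x2 < m" for x1 x2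
    using eq[of 2 x1 x2] that by (simp add: sum3 eps_def alpha_sum alpha_sum[unfolded One_nat_def])
  have Y0: "Y 0 j x1 = 0" if "x1 < m" "j < m" for j x1
  proof -
    define i where "i = (if j = 0 then m - 1 else j - 1)"
    have i: "i < m" "Suc i mod m = j" "i \<noteq> j" using assms that by (auto simp: i_def)
    have "of_nat i * Y 0 j x1 = of_nat j * Y 0 j x1"
      using e0[OF that(1) i(1)] e1[OF that] e2[OF that(1) i(1)] i(2) by simp
    then have "(of_nat i - of_nat j) * Y 0 j x1 = (0::complex)" by (simp add: algebra_simps)
    moreover have "(of_nat i :: complex) \<noteq> of_nat j" using i(3) by simp
    ultimately show ?thesis by simp
  qed
  have Yall: "Y q i j = 0" if "q < 3" "i < m" "j < m" for q i j
  proof -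
    have "Suc i mod m < m" using that by simp
    then have "q = 0 \<or> q = 1 \<or> q = 2" using that by auto
    then show ?thesis using Y0 e1 e2 that \<open>Suc i mod m < m\<close> by auto
  qed
  have "w = 0\<^sub>v ?N"
  proof (rule eq_vecI)
    fix C assume "C < dim_vec (0\<^sub>v ?N :: complex vec)"
    then have C: "C < ?N" by simp
    have "w $ C = Y (fst (dec m C)) (fst (snd (dec m C))) (snd (snd (dec m C)))"
      unfolding Y_def using dec_enc[OF C] by simp
    also have "\<dots> = 0" using dec_bound[OF C] by (intro Yall) (auto simp: mat_idx_def mem_Times_iff)
    finally show "w $ C = 0\<^sub>v ?N $ C" using C by simp
  qed (use w(1) in auto)
  then show False using w(2) by simp
qed


lemma key: assumes "det (Kmat m T) \<noteq> 0" "border_rank_le (mat_idx m) T r"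
  shows "3*(m*m) \<le> 2*r"
proof (rule ccontr)
  assume "\<not> 3*(m*m) \<le> 2*r"
  then have lt: "2*r < 3*(m*m)" by simp
  obtain u v x where conv: "\<forall>a\<in>mat_idx m. \<forall>b\<in>mat_idx m. \<forall>c\<in>mat_idx m.
      (\<lambda>k. sum_rank_one r (u k) (v k) (x k) a b c) \<longlonglongrightarrow> T a b c"
    using assms(2) unfolding border_rank_le_def by blast
  have "(\<lambda>k. det (Kmat m (\<lambda>a b c. sum_rank_one r (u k) (v k) (x k) a b c))) \<longlonglongrightarrow> det (Kmat m T)"
    by (rule cont) (use conv in simp)
  moreover have "(\<lambda>k. det (Kmat m (\<lambda>a b c. sum_rank_one r (u k) (v k) (x k) a b c))) = (\<lambda>k. 0)"
    using low_rank[OF lt] by simp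
  ultimately have "(\<lambda>k. 0::complex) \<longlonglongrightarrow> det (Kmat m T)" by simp
  then have "det (Kmat m T) = 0" using LIMSEQ_unique tendsto_const by blast
  then show False using assms(1) by simp
qed

lemma exists_dec: "border_rank_le (mat_idx m) (matmul_tensor m) (m*m*m)"
proof -
  define u where "u s a = (if a = (s div m div m, s div m mod m) then 1 else 0 :: complex)" for s a
  define v where "v s b = (if b = (s div m mod m, s mod m) then 1 else 0 :: complex)" for s b
  define x where "x s c = (if c = (s mod m, s div m div m) then 1 else 0 :: complex)" for s c
  have "sum_rank_one (m*m*m) u v x a b c = matmul_tensor m a b c" for a b c
  proof -
    have "sum_rank_one (m*m*m) u v x a b c = (\<Sum>s<m*m*m. u s a * v s b * x s c)"
      by (simp add: sum_rank_one_def)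
    also have "\<dots> = (\<Sum>i<m. \<Sum>j<m. \<Sum>l<m. u ((i*m+j)*m+l) a * v ((i*m+j)*m+l) b * x ((i*m+j)*m+l) c)"
      by (simp add: sum_split)
    also have "\<dots> = matmul_tensor m a b c" unfolding matmul_tensor_def
    proof (intro sum.cong refl)
      fix i j l assume "i \<in> {..<m}" "j \<in> {..<m}" "l \<in> {..<m}"
      then have d: "((i*m+j)*m+l) div m = i*m+j" "((i*m+j)*m+l) mod m = l"
        "(i*m+j) div m = i" "(i*m+j) mod m = j" by auto
      show "u ((i*m+j)*m+l) a * v ((i*m+j)*m+l) b * x ((i*m+j)*m+l) c =
          (if a = (i,j) \<and> b = (j,l) \<and> c = (l,i) then 1 else 0)"
        unfolding u_def v_def x_def d by auto
    qed
    finally show ?thesis .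
  qed
  then show ?thesis unfolding border_rank_le_def
    by (intro exI[of _ "\<lambda>k. u"] exI[of _ "\<lambda>k. v"] exI[of _ "\<lambda>k. x"]) simp
qed

lemma br_ge: assumes "m \<ge> 2" shows "3*(m*m) \<le> 2 * border_rank (mat_idx m) (matmul_tensor m)"
proof -
  have "border_rank_le (mat_idx m) (matmul_tensor m) (border_rank (mat_idx m) (matmul_tensor m))"
    unfolding border_rank_def by (rule LeastI[of "border_rank_le (mat_idx m) (matmul_tensor m)", OF exists_dec])
  then show ?thesis using key detM[OF assms] by blast
qed

lemma br_one: "border_rank (mat_idx 1) (matmul_tensor 1) \<ge> 1"
proof -
  have P: "border_rank_le (mat_idx 1) (matmul_tensor 1) (border_rank (mat_idx 1) (matmul_tensor 1))"
    unfolding border_rank_def by (rule LeastI[of "border_rank_le (mat_idx 1) (matmul_tensor 1)", OF exists_dec])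
  have "\<not> border_rank_le (mat_idx 1) (matmul_tensor 1) 0"
  proof
    assume "border_rank_le (mat_idx 1) (matmul_tensor 1) 0"
    then have "(\<lambda>k. 0::complex) \<longlonglongrightarrow> matmul_tensor 1 (0,0) (0,0) (0,0)"
      unfolding border_rank_le_def sum_rank_one_def by (auto simp: mat_idx_def)
    moreover have "matmul_tensor 1 (0,0) (0,0) (0,0) = 1" by (simp add: matmul_tensor_def)
    ultimately have "(\<lambda>k. 0::complex) \<longlonglongrightarrow> 1" by simp
    then show False using LIMSEQ_unique tendsto_const by fastforce
  qed
  then show ?thesis using P by (cases "border_rank (mat_idx 1) (matmul_tensor 1)") auto
qed

theorem theorem4p5:
  fixes m :: nat
  shows "(odd m \<longrightarrow> real (border_rank (mat_idx m) (matmul_tensor m)) \<ge> 3/2 * real m ^ 2 - 1/2)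
       \<and> (even m \<longrightarrow> real (border_rank (mat_idx m) (matmul_tensor m)) \<ge> 3/2 * real m ^ 2 - 2)"
proof (cases "m \<ge> 2")
  case True
  have "real (3*(m*m)) \<le> real (2 * border_rank (mat_idx m) (matmul_tensor m))"
    using br_ge[OF True] by linarith
  then have "3/2 * real m ^ 2 \<le> real (border_rank (mat_idx m) (matmul_tensor m))"
    by (simp add: power2_eq_square)
  then show ?thesis by linarith
next
  case False
  then have "m = 0 \<or> m = 1" by auto
  then show ?thesis
  proof
    assume "m = 0" then show ?thesis by simp
  next
    assume m1: "m = 1"
    then show ?thesis using br_one by simp
  qed
qed

end
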